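(* Let $n\ge3$, $c>0$, and let $\omega$ be as in the context. Then: (i) for all $x\ge x_0$, $(\gamma(x)+nc)\,x\,\frac{\omega'(x)}{\omega(x)}=2\gamma(x)-x\gamma'(x)-3nc$; (ii) $2x_0\omega''(x_0)+\omega'(x_0)>0$ and $\lim_{x\to\infty}\left(2x\omega''(x)+\omega'(x)\right)>0$; (iii) $\omega(x)-x\omega'(x)$ is bounded on $[0,\infty)$.
   Context: Definition of $\gamma$: For $n\ge 3$, $c>0$ and $x\ge 0$ put $\alpha(x)=nc+\frac{n}{2(n-1)}x-\frac{n-2}{2(n-1)}\sqrt{x^2+4(n-1)cx}$, $y_n=4(1-n)+\frac{2(n^2-4)}{\sqrt{2n-5}}\cos\!\left(\frac13\arctan\frac{n^2-4n+6}{2(n-1)\sqrt{2n-5}}\right)$, $x_0=y_nc$, $\beta(x)=\alpha(x_0)+\alpha'(x_0)(x-x_0)+\frac12\alpha''(x_0)(x-x_0)^2$, and $\gamma(x)=\alpha(x)$ for $x\ge x_0$, $\gamma(x)=\beta(x)$ for $0\le x<x_0$. Definition of $\omega$: $\omega$ is a positive $C^2$ function on $[0,\infty)$ such that for $x\ge x_0$ \[\omega(x)=\frac{x^2}{\sqrt{x^2+4(n-1)cx}}\left[\left(1+\frac{n^2c}{x}\right)\frac{\frac{n}{n-2}-\left(1+4(n-1)c/x\right)^{-1/2}}{\frac{n}{n-2}+\left(1+4(n-1)c/x\right)^{-1/2}}\right]^2.\] (On $[0,x_0)$, $\omega$ is an arbitrary positive $C^2$ extension; derivatives at $x_0$ are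 those of this $C^2$ function.) *)

theory Defs
  imports "HOL-Analysis.Analysis"
begin

definition alpha :: "nat \<Rightarrow> real \<Rightarrow> real \<Rightarrow> real" where
  "alpha n c x = real n * c + real n / (2 * (real n - 1)) * x
     - (real n - 2) / (2 * (real n - 1)) * sqrt (x^2 + 4 * (real n - 1) * c * x)"

definition y_n :: "nat \<Rightarrow> real" where
  "y_n n = 4 * (1 - real n) + 2 * ((real n)^2 - 4) / sqrt (2 * real n - 5)
     * cos (1/3 * arctan (((real n)^2 - 4 * real n + 6) / (2 * (real n - 1) * sqrt (2 * real n - 5))))"

definition x_0 :: "nat \<Rightarrow> real \<Rightarrow> real" where
  "x_0 n c = y_n n * c"

definition beta :: "nat \<Rightarrow> real \<Rightarrow> real \<Rightarrow> real" where
  "beta n c x = alpha n c (x_0 n c) + deriv (alpha n c) (x_0 n c) * (x - x_0 n c)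
     + 1/2 * deriv (deriv (alpha n c)) (x_0 n c) * (x - x_0 n c)^2"

definition gamma :: "nat \<Rightarrow> real \<Rightarrow> real \<Rightarrow> real" where
  "gamma n c x = (if x \<ge> x_0 n c then alpha n c x else beta n c x)"

definition omega_formula :: "nat \<Rightarrow> real \<Rightarrow> real \<Rightarrow> real" where
  "omega_formula n c x = x^2 / sqrt (x^2 + 4 * (real n - 1) * c * x) *
     ((1 + (real n)^2 * c / x) *
      (real n / (real n - 2) - 1 / sqrt (1 + 4 * (real n - 1) * c / x)) /
      (real n / (real n - 2) + 1 / sqrt (1 + 4 * (real n - 1) * c / x)))^2"

end

theory Submission
  imports Defs
begin

definition "Ap m t = (m+2) * t - (m::real)"
definition "Qp m t = (m+2) * t^3 + 3 * m * t^2 - 3 * (m+2) * t - (m::real)"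
definition "Qpd m t = 3 * (m+2) * t^2 + 6 * m * t - 3 * (m+2::real)"
definition "Nn m t = Ap m t ^ 3 * Qp m t"
definition "Nnd m t = 3 * (m+2) * Ap m t ^ 2 * Qp m t + Ap m t ^ 3 * Qpd m t"
definition "Gs m t = Ap m t ^ 4 / (t * (t^2 - 1))"
definition "Gd m t = Ap m t ^ 3 * Qp m t / (t^2 * (t^2 - 1)^2)"
definition "Hs m t = Nn m t / (32 * (m+1)^2 * t^3)"
definition "Hd m t = (Nnd m t * t - 3 * Nn m t) / (32 * (m+1)^2 * t^4)"
definition "Er m t = (t^2 - 1) / t * Hd m t - Hs m t"
definition "Pp m t = t * (t^2 - 1) * Nnd m t - (4 * t^2 - 3) * Nn m t"
definition "Bd m c t = c * Ap m t ^ 3 * (3 * (m+2) * t + m) / (8 * (m+1) * t^3)"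

lemma nat_sub_simps: "(4::nat) - Suc 0 = 3" "(2::nat) - Suc 0 = 1" "(3::nat) - Suc 0 = 2" "(5::nat) - Suc 0 = 4" "(6::nat) - Suc 0 = 5" "(1::nat) - Suc 0 = 0" by auto

lemma DERIV_Gs: assumes "t > 1" shows "DERIV (Gs m) t :> Gd m t"
proof -
  have s0: "t \<noteq> 0" and s2: "t^2 - 1 \<noteq> 0" using assms by (auto simp: power2_eq_square) (smt (verit) mult_less_cancel_right1)
  show ?thesis unfolding Gs_def[abs_def] Ap_def
    apply (rule derivative_eq_intros refl)+
    using s0 s2 apply simp
    unfolding Gd_def Ap_def Qp_def using s0 s2
    apply (subst frac_eq_eq)
      apply simp
     apply simp
    apply (simp only: of_nat_numeral nat_sub_simps)
    apply algebra
    done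
qed

lemma DERIV_Hs: assumes "t > 0" "m > 0" shows "DERIV (Hs m) t :> Hd m t"
proof -
  have s0: "t \<noteq> 0" and m1: "m + 1 \<noteq> 0" using assms by auto
  show ?thesis unfolding Hs_def[abs_def] Nn_def Ap_def Qp_def
    apply (rule derivative_eq_intros refl)+
    using s0 m1 apply simp
    unfolding Hd_def Nn_def Nnd_def Ap_def Qp_def Qpd_def using s0 m1
    apply (subst frac_eq_eq)
      apply simp
     apply simp
    apply (simp only: of_nat_numeral nat_sub_simps)
    apply algebra
    done
qed

lemma Er_eq: assumes "t > 0" "m > 0" shows "Er m t = Pp m t / (32 * (m+1)^2 * t^5)"
proof -
  have s0: "t \<noteq> 0" and m1: "m + 1 \<noteq> 0" using assms by auto
  show ?thesis unfolding Er_def Hd_def Hs_def Pp_def using s0 m1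
    by (simp add: divide_simps) algebra
qed

lemma Pp_shift: "Pp m t = (let p = t - 1; j = m - 1 in (32) + p * ((160) + p * ((896 + j * (576 + j * (144))) + p * ((3456 + j * (3616 + j * (1344 + j * (160)))) + p * ((6906 + j * (8480 + j * (3804 + j * (704 + j * (42))))) + p * ((7374 + j * (9640 + j * (4692 + j * (1000 + j * (78))))) + p * ((4293 + j * (5724 + j * (2862 + j * (636 + j * (53))))) + p * ((1296 + j * (1728 + j * (864 + j * (192 + j * (16))))) + p * ((162 + j * (216 + j * (108 + j * (24 + j * (2))))))))))))))"
  unfolding Pp_def Nnd_def Nn_def Ap_def Qp_def Qpd_def Let_def by algebra

lemma Pp_pos: assumes "t > 1" "m \<ge> 1" shows "Pp m t > 0"
proof -
  have p: "t - 1 \<ge> 0" and j: "m - 1 \<ge> 0" using assms by auto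
  show ?thesis unfolding Pp_shift Let_def
    by (intro add_pos_nonneg add_nonneg_nonneg mult_nonneg_nonneg p j; simp)
qed

lemma Er_pos: assumes "t > 1" "m \<ge> 1" shows "Er m t > 0"
  using assms by (simp add: Er_eq Pp_pos)

lemma Er_1: "Er m 1 = 1 / (m+1)^2"
  unfolding Er_def Hs_def Nn_def Ap_def Qp_def by (simp add: field_simps)

lemma Pp_cont: "isCont (Pp m) t"
  unfolding Pp_def[abs_def] Nn_def Nnd_def Ap_def Qp_def Qpd_def
  by (intro continuous_intros)

lemma DERIV_sq:
  fixes k c x :: real
  assumes "x > 0" "k > 0" "c > 0"
  shows "DERIV (\<lambda>x. sqrt (1 + 4 * k * c / x)) x :> - 2 * k * c / (x^2 * sqrt (1 + 4 * k * c / x))"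
proof -
  have "4 * k * c / x > 0" using assms by simp
  then have p: "1 + 4 * k * c / x > 0" by simp
  have "DERIV (\<lambda>x. 1 + 4 * k * c * inverse x) x :> 0 + 4 * k * c * (- (inverse x ^ Suc (Suc 0)))"
    by (intro DERIV_add DERIV_const DERIV_cmult DERIV_inverse) (use assms in auto)
  then have g: "DERIV (\<lambda>x. 1 + 4 * k * c / x) x :> - (4 * k * c) / x^2"
    by (simp add: divide_inverse power2_eq_square)
  have "DERIV (\<lambda>x. sqrt (1 + 4 * k * c / x)) x :> inverse (sqrt (1 + 4 * k * c / x)) / 2 * (- (4 * k * c) / x^2)"
    using DERIV_chain2[OF DERIV_real_sqrt[OF p] g] .
  moreover have "inverse (sqrt (1 + 4 * k * c / x)) / 2 * (- (4 * k * c) / x^2) = - 2 * k * c / (x^2 * sqrt (1 + 4 * k * c / x))"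
    by (simp add: divide_simps)
  ultimately show ?thesis by simp
qed



lemma s_x:
  fixes m c s x :: real
  assumes m: "m > 0" and c: "c > 0" and s: "s > 1" and x: "x = 4 * (m+1) * c / (s^2 - 1)"
  shows "x > 0" "s \<noteq> 0" "s^2 - 1 > 0" "s^2 - 1 \<noteq> 0" "c = x * (s^2 - 1) / (4 * (m+1))"
proof -
  show s2: "s^2 - 1 > 0" using s by (simp add: one_less_power)
  then show "s^2 - 1 \<noteq> 0" by simp
  show "x > 0" unfolding x using s2 m c by simp
  show "s \<noteq> 0" using s by simp
  show "c = x * (s^2 - 1) / (4 * (m+1))" unfolding x using s2 m by simp
qed

lemma Id_F1:
  fixes m c s x :: real
  assumes m: "m > 0" and c: "c > 0" and s: "s > 1" and x: "x = 4 * (m+1) * c / (s^2 - 1)"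
  shows "c * (Gd m s * (- 2 * (m+1) * c / (x^2 * s))) / (4 * (m+1)) = - Hs m s"
proof -
  note sx = s_x[OF m c s x]
  have m1: "m + 1 \<noteq> 0" using m by simp
  show ?thesis
    unfolding x Gd_def Hs_def Nn_def using sx(1,2,4) m1 c
    by (simp add: divide_simps) algebra
qed


lemma Id_E:
  fixes m c s x :: real
  assumes m: "m > 0" and c: "c > 0" and s: "s > 1" and x: "x = 4 * (m+1) * c / (s^2 - 1)"
  shows "2 * x * (- (Hd m s * (- 2 * (m+1) * c / (x^2 * s)))) + - Hs m s = Er m s"
proof -
  note sx = s_x[OF m c s x]
  have m1: "m + 1 \<noteq> 0" using m by simp
  show ?thesis
    unfolding sx(5) Er_def using sx(1,2,4) m1
    by (simp add: divide_simps) algebra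
qed

lemma Id_B:
  fixes m c s x :: real
  assumes m: "m > 0" and c: "c > 0" and s: "s > 1" and x: "x = 4 * (m+1) * c / (s^2 - 1)"
  shows "c * Gs m s / (4 * (m+1)) - x * (- Hs m s) = Bd m c s"
proof -
  note sx = s_x[OF m c s x]
  have m1: "m + 1 \<noteq> 0" using m by simp
  show ?thesis
    unfolding sx(5) Gs_def Hs_def Bd_def Nn_def Ap_def Qp_def using sx(1,2,4) m1
    by (simp add: divide_simps) algebra
qed

lemma Id_i:
  fixes m c s x :: real
  assumes m: "m > 0" and c: "c > 0" and s: "s > 1" and x: "x = 4 * (m+1) * c / (s^2 - 1)"
  defines "al \<equiv> (m+2) * c + (m+2) / (2 * (m+1)) * x - m / (2 * (m+1)) * (x * s)"
  defines "ald \<equiv> (m+2) / (2 * (m+1)) - m / (2 * (m+1)) * ((2 * x + 4 * (m+1) * c) / (2 * (x * s)))"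
  shows "(al + (m+2) * c) * x * (- Hs m s / (c * Gs m s / (4 * (m+1)))) = 2 * al - x * ald - 3 * (m+2) * c"
proof -
  note sx = s_x[OF m c s x]
  have m1: "m + 1 \<noteq> 0" using m by simp
  have "(m+2) * (s-1) > 0" using m s by simp
  then have A: "Ap m s \<noteq> 0" unfolding Ap_def by (simp add: algebra_simps)
  have w: "s^2 - 1 \<noteq> 0" "s \<noteq> 0" "x \<noteq> 0" using sx by auto
  have xs: "x * (s^2 - 1) = 4 * (m+1) * c" unfolding x using w by simp
  have e1: "al + (m+2) * c = 2 * c * s * Ap m s / (s^2 - 1)"
    unfolding al_def x Ap_def using w m1 by (simp add: divide_simps) algebra
  have e2: "- Hs m s / (c * Gs m s / (4 * (m+1))) = - Qp m s * (s^2 - 1) / (8 * (m+1) * c * s^2 * Ap m s)"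
    unfolding Hs_def Gs_def Nn_def using w m1 A c by (simp add: divide_simps) algebra
  have e3: "(2 * x + 4 * (m+1) * c) / (2 * (x * s)) = (s^2 + 1) / (2 * s)"
    using w xs by (simp add: divide_simps) algebra
  have e4: "2 * al - x * ald - 3 * (m+2) * c = - c * Qp m s / (s * (s^2 - 1))"
    unfolding al_def ald_def e3 x Qp_def using w m1 by (simp add: divide_simps) algebra
  show ?thesis unfolding e1 e2 e4 unfolding x using w m1 A c by (simp add: divide_simps) algebra
qed


lemma F_alg:
  fixes N s c x :: real
  assumes N: "N > 2" and s: "s > 1" and c: "c > 0" and xdef: "x = 4 * (N - 1) * c / (s^2 - 1)"
  shows "x^2 / (x * s) * ((1 + N^2 * c / x) * (N / (N - 2) - 1 / s) / (N / (N - 2) + 1 / s))^2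
    = c * ((N * s - (N - 2))^4 / (s * (s^2 - 1))) / (4 * (N - 1))"
proof -
  define A where "A = N * s - (N - 2)"
  define B where "B = N * s + (N - 2)"
  define q where "q = (N - 2) * s"
  have s2: "s^2 - 1 > 0" using s by (simp add: one_less_power)
  have x: "x > 0" unfolding xdef using s2 N c by simp
  have "N * (s - 1) > 0" using N s by simp
  then have A: "A > 0" unfolding A_def by (simp add: algebra_simps)
  have "N * s > 0" using N s by simp
  then have B: "B > 0" unfolding B_def using N by simp
  have q: "q > 0" unfolding q_def using N s by simp
  have key: "x + N^2 * c = c * A * B / (s^2 - 1)"
    unfolding xdef A_def B_def using s2 by (simp add: divide_simps; algebra)
  have e1: "N / (N - 2) - 1 / s = A / q" unfolding A_def q_def using N s by (simp add: divide_simps; algebra)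
  have e2: "N / (N - 2) + 1 / s = B / q" unfolding B_def q_def using N s by (simp add: divide_simps; algebra)
  have e3: "1 + N^2 * c / x = (x + N^2 * c) / x" using x by (simp add: divide_simps)
  have e4: "(A / q) / (B / q) = A / B" using q by simp
  have "x^2 / (x * s) * ((1 + N^2 * c / x) * (N / (N - 2) - 1 / s) / (N / (N - 2) + 1 / s))^2
     = x^2 / (x * s) * ((x + N^2 * c) / x * (A / B))^2"
    unfolding e1 e2 e3 using e4 q by (simp add: mult.assoc)
  also have "\<dots> = (c * A * B / (s^2 - 1))^2 * A^2 / (x * s * B^2)"
    unfolding key using x s B by (simp add: divide_simps; algebra)
  also have "\<dots> = c * (A^4 / (s * (s^2 - 1))) / (4 * (N - 1))"
    unfolding xdef using s N A B s2 c by (simp add: divide_simps; algebra)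
  finally show ?thesis unfolding A_def .
qed

lemma deriv_unique_Ici:
  fixes f :: "real \<Rightarrow> real"
  assumes "(f has_real_derivative a) (at x within {x..})" "(f has_real_derivative b) (at x within {x..})"
  shows "a = b"
proof -
  have "at x within {x..} \<noteq> bot" by (simp add: at_within_Ici_at_right)
  then show ?thesis using assms vector_derivative_unique_within
    by (metis has_real_derivative_iff_has_vector_derivative)
qed

lemma deriv_match:
  fixes f g :: "real \<Rightarrow> real"
  assumes x0: "x0 \<ge> 0" and x: "x \<ge> x0"
    and df: "(f has_real_derivative d) (at x within {0..})"
    and dg: "(g has_real_derivative D) (at x)"
    and eq: "\<And>y. y \<ge> x0 \<Longrightarrow> f y = g y"
  shows "d = D"
proof -
  have "(f has_real_derivative d) (at x within {x..})"
    using has_field_derivative_subset[OF df] x x0 by auto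
  moreover have "(f has_real_derivative D) (at x within {x..})"
  proof (rule has_field_derivative_transform_within[where d=1])
    show "(g has_real_derivative D) (at x within {x..})" using dg by (rule has_field_derivative_at_within)
    show "\<And>y. y \<in> {x..} \<Longrightarrow> dist y x < 1 \<Longrightarrow> g y = f y" using eq x by auto
  qed auto
  ultimately show ?thesis by (rule deriv_unique_Ici)
qed



definition sf :: "nat \<Rightarrow> real \<Rightarrow> real \<Rightarrow> real" where
  "sf n c x = sqrt (1 + 4 * (real n - 1) * c / x)"

definition ald :: "nat \<Rightarrow> real \<Rightarrow> real \<Rightarrow> real" where
  "ald n c x = real n / (2 * (real n - 1)) - (real n - 2) / (2 * (real n - 1)) *
     (inverse (sqrt (x^2 + 4 * (real n - 1) * c * x)) / 2 * (2 * x + 4 * (real n - 1) * c))"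

context
  fixes n :: nat and c :: real
  assumes n3: "n \<ge> 3" and cpos: "c > 0"
begin

lemma mf: "real n - 2 > 0" "real n - 2 \<ge> 1" "real n - 2 + 1 = real n - 1" "real n - 2 + 2 = real n"
  "real n > 2" "real n - 1 > 0"
  using n3 by auto

lemma s_props:
  assumes x: "x > 0"
  shows "sf n c x > 1" "x = 4 * (real n - 2 + 1) * c / ((sf n c x)^2 - 1)"
    "sqrt (x^2 + 4 * (real n - 1) * c * x) = x * sf n c x"
proof -
  have k: "real n - 1 > 0" using n3 by simp
  have k3: "real n \<ge> 3" using n3 by simp
  have p: "4 * (real n - 1) * c / x > 0" using k cpos x by simp
  show 1: "sf n c x > 1" unfolding sf_def using p by simp
  have 2: "(sf n c x)^2 = 1 + 4 * (real n - 1) * c / x" unfolding sf_def using p by simp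
  have e: "(sf n c x)^2 - 1 = 4 * (real n - 1) * c / x" using 2 by simp
  show "x = 4 * (real n - 2 + 1) * c / ((sf n c x)^2 - 1)" unfolding e using p x cpos k k3 by simp
  have "x^2 + 4 * (real n - 1) * c * x = x^2 * (1 + 4 * (real n - 1) * c / x)" using x by (simp add: field_simps power2_eq_square)
  then show "sqrt (x^2 + 4 * (real n - 1) * c * x) = x * sf n c x" unfolding sf_def using x
    by (simp add: real_sqrt_mult)
qed

lemma F_s:
  assumes x: "x > 0"
  shows "omega_formula n c x = c * Gs (real n - 2) (sf n c x) / (4 * (real n - 2 + 1))"
proof -
  have xe: "x = 4 * (real n - 1) * c / ((sf n c x)^2 - 1)" using s_props(2)[OF x] mf by simp
  have q: "sqrt (1 + 4 * (real n - 1) * c / x) = sf n c x" unfolding sf_def ..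
  show ?thesis
    unfolding omega_formula_def s_props(3)[OF x] q
    using F_alg[OF mf(5) s_props(1)[OF x] cpos xe] mf
    by (simp add: Gs_def Ap_def)
qed

lemma DERIV_sf:
  assumes x: "x > 0"
  shows "DERIV (sf n c) x :> - 2 * (real n - 2 + 1) * c / (x^2 * sf n c x)"
  using DERIV_sq[OF x mf(6) cpos] mf unfolding sf_def[abs_def] by simp

lemma DERIV_F:
  assumes x: "x > 0"
  shows "DERIV (omega_formula n c) x :> - Hs (real n - 2) (sf n c x)"
proof -
  let ?M = "real n - 2"
  let ?s = "sf n c x"
  have d: "DERIV (\<lambda>y. c * Gs ?M (sf n c y) / (4 * (?M + 1))) x :>
      c * (Gd ?M ?s * (- 2 * (?M + 1) * c / (x^2 * ?s))) / (4 * (?M + 1))"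
    by (intro DERIV_cdivide DERIV_cmult DERIV_chain2[OF DERIV_Gs DERIV_sf]) (use s_props x in auto)
  have e: "c * (Gd ?M ?s * (- 2 * (?M + 1) * c / (x^2 * ?s))) / (4 * (?M + 1)) = - Hs ?M ?s"
    by (rule Id_F1[OF mf(1) cpos s_props(1)[OF x] s_props(2)[OF x]])
  show ?thesis
  proof (rule has_field_derivative_transform_within_open[where S="{0<..}"])
    show "DERIV (\<lambda>y. c * Gs ?M (sf n c y) / (4 * (?M + 1))) x :> - Hs ?M ?s" using d e by simp
    show "\<And>y. y \<in> {0<..} \<Longrightarrow> c * Gs ?M (sf n c y) / (4 * (?M + 1)) = omega_formula n c y"
      using F_s by simp
  qed (use x in auto)
qed

lemma DERIV_F1:
  assumes x: "x > 0"
  shows "DERIV (\<lambda>y. - Hs (real n - 2) (sf n c y)) x :>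
     - (Hd (real n - 2) (sf n c x) * (- 2 * (real n - 2 + 1) * c / (x^2 * sf n c x)))"
proof -
  have "sf n c x > 0" using s_props(1)[OF x] by simp
  then show ?thesis by (intro DERIV_minus DERIV_chain2[OF DERIV_Hs DERIV_sf]) (use x mf in auto)
qed

lemma DERIV_alpha:
  assumes x: "x > 0"
  shows "DERIV (alpha n c) x :> ald n c x"
proof -
  have pos: "x^2 + 4 * (real n - 1) * c * x > 0" using x mf cpos by (simp add: add_pos_pos)
  have g: "DERIV (\<lambda>x. x^2 + 4 * (real n - 1) * c * x) x :> 2 * x + 4 * (real n - 1) * c"
    by (rule derivative_eq_intros refl)+ simp
  have sq: "DERIV (\<lambda>x. sqrt (x^2 + 4 * (real n - 1) * c * x)) x :>
      inverse (sqrt (x^2 + 4 * (real n - 1) * c * x)) / 2 * (2 * x + 4 * (real n - 1) * c)"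
    using DERIV_chain2[OF DERIV_real_sqrt[OF pos] g] .
  have "DERIV (\<lambda>x. real n * c + real n / (2 * (real n - 1)) * x
     - (real n - 2) / (2 * (real n - 1)) * sqrt (x^2 + 4 * (real n - 1) * c * x)) x :>
     0 + real n / (2 * (real n - 1)) * 1 - (real n - 2) / (2 * (real n - 1)) *
     (inverse (sqrt (x^2 + 4 * (real n - 1) * c * x)) / 2 * (2 * x + 4 * (real n - 1) * c))"
    by (intro DERIV_diff DERIV_add DERIV_const DERIV_cmult DERIV_ident sq)
  then show ?thesis unfolding alpha_def[abs_def] ald_def by simp
qed

end


context
  fixes n :: nat and c :: real
  assumes n3: "n \<ge> 3" and cpos: "c > 0"
begin

lemma y_pos: "y_n n > 0"
proof -
  define N where "N = real n"
  have N3: "N \<ge> 3" unfolding N_def using n3 by simp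
  define r where "r = sqrt (2 * N - 5)"
  have r: "r > 0" unfolding r_def using N3 by simp
  define z where "z = (N^2 - 4 * N + 6) / (2 * (N - 1) * r)"
  have "N^2 - 4 * N + 6 = (N - 2)^2 + 2" by algebra
  then have "N^2 - 4 * N + 6 > 0" using zero_le_power2[of "N - 2"] by linarith
  then have z: "z > 0" unfolding z_def using r N3 by simp
  define th where "th = arctan z"
  have th: "0 < th" "th < pi / 2" unfolding th_def using z arctan_ubound by auto
  have "cos (pi / 6) < cos (th / 3)"
    by (rule cos_monotone_0_pi) (use th pi_gt_zero in auto)
  then have cosb: "cos (th / 3) > sqrt 3 / 2" by (simp add: cos_30)
  define a where "a = sqrt 3 * (N^2 - 4)"
  define b where "b = 4 * (N - 1) * r"
  have "3^2 \<le> N^2" by (rule power_mono) (use N3 in auto)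
  then have "N^2 \<ge> 9" by simp
  then have N4: "N^2 - 4 > 0" by simp
  have a0: "a \<ge> 0" unfolding a_def using N4 by simp
  have b0: "b \<ge> 0" unfolding b_def using N3 r by simp
  have r2: "r^2 = 2 * N - 5" unfolding r_def using N3 by simp
  have a2: "a^2 = 3 * (N^2 - 4)^2" unfolding a_def by (simp add: power_mult_distrib)
  have b2: "b^2 = 16 * (N - 1)^2 * r^2" unfolding b_def by algebra
  have eq: "a^2 - b^2 = (N - 4)^2 * (3 * N^2 - 8 * N + 8)"
    unfolding a2 b2 r2 by algebra
  have "3 * N^2 - 8 * N + 8 = 3 * (N - 4/3)^2 + 8/3" by algebra
  then have "3 * N^2 - 8 * N + 8 \<ge> 0" using zero_le_power2[of "N - 4/3"] by linarith
  then have "(N - 4)^2 * (3 * N^2 - 8 * N + 8) \<ge> 0" by simp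
  then have "a^2 \<ge> b^2" using eq by linarith
  then have ab: "b \<le> a" using power2_le_imp_le[OF _ a0] by blast
  have e1: "y_n n = 4 * (1 - N) + 2 * (N^2 - 4) / r * cos (th / 3)"
    unfolding y_n_def N_def r_def th_def z_def by simp
  have pos: "2 * (N^2 - 4) / r > 0" using N4 r by simp
  have "2 * (N^2 - 4) / r * (sqrt 3 / 2) < 2 * (N^2 - 4) / r * cos (th / 3)"
    using mult_strict_left_mono[OF cosb pos] .
  moreover have "2 * (N^2 - 4) / r * (sqrt 3 / 2) = a / r" using r unfolding a_def by (simp add: divide_simps)
  moreover have "a / r \<ge> b / r" using divide_right_mono[OF ab, of r] r by simp
  moreover have "b / r = 4 * (N - 1)" unfolding b_def using r by simp
  ultimately have "2 * (N^2 - 4) / r * cos (th / 3) > 4 * (N - 1)" by linarith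
  moreover have "4 * (1 - N) = - (4 * (N - 1))" by simp
  ultimately show ?thesis unfolding e1 by linarith
qed

lemma x0_pos: "x_0 n c > 0"
  unfolding x_0_def using y_pos cpos by simp

lemma gamma_deriv:
  assumes x: "x \<ge> x_0 n c"
  shows "DERIV (gamma n c) x :> ald n c x"
proof (cases "x > x_0 n c")
  case True
  have xp: "x > 0" using x x0_pos by linarith
  show ?thesis
  proof (rule has_field_derivative_transform_within_open[where S="{x_0 n c<..}"])
    show "DERIV (alpha n c) x :> ald n c x" by (rule DERIV_alpha[OF n3 cpos xp])
    show "\<And>y. y \<in> {x_0 n c<..} \<Longrightarrow> alpha n c y = gamma n c y" unfolding gamma_def by auto
  qed (use True in auto)
next
  case False
  then have xe: "x = x_0 n c" using x by simp
  let ?x0 = "x_0 n c"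
  have dA: "DERIV (alpha n c) ?x0 :> ald n c ?x0" by (rule DERIV_alpha[OF n3 cpos x0_pos])
  have dd: "deriv (alpha n c) ?x0 = ald n c ?x0" by (rule DERIV_imp_deriv[OF dA])
  have dB: "DERIV (beta n c) ?x0 :> ald n c ?x0"
    unfolding beta_def[abs_def] dd
    by (rule derivative_eq_intros refl)+ simp
  have bx: "beta n c ?x0 = alpha n c ?x0" unfolding beta_def by simp
  have r: "(gamma n c has_real_derivative ald n c ?x0) (at ?x0 within {?x0..})"
  proof (rule has_field_derivative_transform_within[where d=1])
    show "(alpha n c has_real_derivative ald n c ?x0) (at ?x0 within {?x0..})"
      using dA by (rule has_field_derivative_at_within)
  qed (auto simp: gamma_def)
  have l: "(gamma n c has_real_derivative ald n c ?x0) (at ?x0 within {..?x0})"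
  proof (rule has_field_derivative_transform_within[where d=1])
    show "(beta n c has_real_derivative ald n c ?x0) (at ?x0 within {..?x0})"
      using dB by (rule has_field_derivative_at_within)
  qed (auto simp: gamma_def bx)
  have U: "{..?x0} \<union> {?x0..} = UNIV" by auto
  have "at ?x0 = sup (at ?x0 within {..?x0}) (at ?x0 within {?x0..})"
    using at_within_union[of ?x0 "{..?x0}" "{?x0..}"] U by simp
  then show ?thesis unfolding xe using l r
    unfolding has_field_derivative_iff by (simp add: filterlim_sup)
qed

end


theorem mainTheorem10:
  fixes n :: nat and c :: real
    and \<omega> \<omega>' \<omega>'' :: "real \<Rightarrow> real"
  assumes n3: "n \<ge> 3" and cpos: "c > 0"
    and pos: "\<And>x. x \<ge> 0 \<Longrightarrow> \<omega> x > 0"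
    and d1: "\<And>x. x \<ge> 0 \<Longrightarrow> (\<omega> has_real_derivative \<omega>' x) (at x within {0..})"
    and d2: "\<And>x. x \<ge> 0 \<Longrightarrow> (\<omega>' has_real_derivative \<omega>'' x) (at x within {0..})"
    and cont2: "continuous_on {0..} \<omega>''"
    and formula: "\<And>x. x \<ge> x_0 n c \<Longrightarrow> \<omega> x = omega_formula n c x"
  shows "(\<forall>x \<ge> x_0 n c.
            (gamma n c x + real n * c) * x * (\<omega>' x / \<omega> x)
              = 2 * gamma n c x - x * deriv (gamma n c) x - 3 * real n * c)
       \<and> 2 * x_0 n c * \<omega>'' (x_0 n c) + \<omega>' (x_0 n c) > 0
       \<and> (\<exists>L > 0. ((\<lambda>x. 2 * x * \<omega>'' x + \<omega>' x) \<longlongrightarrow> L) at_top)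
       \<and> bounded ((\<lambda>x. \<omega> x - x * \<omega>' x) ` {0..})"
proof -
  let ?M = "real n - 2"
  define x0 where "x0 = x_0 n c"
  have x0p: "x0 > 0" unfolding x0_def using x0_pos[OF n3 cpos] .
  note mf = mf[OF n3 cpos]
  note sp = s_props[OF n3 cpos]
  have xpos: "\<And>x. x \<ge> x0 \<Longrightarrow> x > 0" using x0p by linarith
  have x00: "x0 \<ge> 0" using x0p by simp
  have form': "\<And>y. y \<ge> x0 \<Longrightarrow> \<omega> y = omega_formula n c y" using formula unfolding x0_def .
  have W1: "\<omega>' x = - Hs ?M (sf n c x)" if x: "x \<ge> x0" for x
  proof -
    have "x \<ge> 0" using xpos[OF x] by simp
    from deriv_match[OF x00 x d1[OF this] DERIV_F[OF n3 cpos xpos[OF x]] form']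
    show ?thesis .
  qed
  have W2: "\<omega>'' x = - (Hd ?M (sf n c x) * (- 2 * (?M + 1) * c / (x^2 * sf n c x)))" if x: "x \<ge> x0" for x
  proof -
    have "x \<ge> 0" using xpos[OF x] by simp
    from deriv_match[OF x00 x d2[OF this] DERIV_F1[OF n3 cpos xpos[OF x]] W1]
    show ?thesis .
  qed
  have EE: "2 * x * \<omega>'' x + \<omega>' x = Er ?M (sf n c x)" if x: "x \<ge> x0" for x
    unfolding W1[OF x] W2[OF x]
    by (rule Id_E[OF mf(1) cpos sp(1)[OF xpos[OF x]] sp(2)[OF xpos[OF x]]])
  have P1: "(gamma n c x + real n * c) * x * (\<omega>' x / \<omega> x)
              = 2 * gamma n c x - x * deriv (gamma n c) x - 3 * real n * c" if x: "x \<ge> x0" for x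
  proof -
    have xp: "x > 0" using xpos[OF x] .
    let ?s = "sf n c x"
    have g: "gamma n c x = real n * c + real n / (2 * (real n - 1)) * x - (real n - 2) / (2 * (real n - 1)) * (x * ?s)"
    proof -
      have "gamma n c x = alpha n c x" using x unfolding x0_def gamma_def by simp
      then show ?thesis unfolding alpha_def sp(3)[OF xp] .
    qed
    have gd: "deriv (gamma n c) x = real n / (2 * (real n - 1)) - (real n - 2) / (2 * (real n - 1)) * ((2 * x + 4 * (real n - 1) * c) / (2 * (x * ?s)))"
    proof -
      have "x * ?s \<noteq> 0" using xp sp(1)[OF xp] by simp
      then have e: "inverse (x * ?s) / 2 * (2 * x + 4 * (real n - 1) * c) = (2 * x + 4 * (real n - 1) * c) / (2 * (x * ?s))"
        by (simp add: field_simps)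
      show ?thesis using DERIV_imp_deriv[OF gamma_deriv[OF n3 cpos x[unfolded x0_def]]]
        unfolding ald_def sp(3)[OF xp] e .
    qed
    have w: "\<omega> x = c * Gs ?M ?s / (4 * (real n - 1))"
      using formula[of x] x F_s[OF n3 cpos xp] mf unfolding x0_def by simp
    have Id: "((real n * c + real n / (2 * (real n - 1)) * x - (real n - 2) / (2 * (real n - 1)) * (x * ?s)) + real n * c) * x * (- Hs ?M ?s / (c * Gs ?M ?s / (4 * (real n - 1))))
       = 2 * (real n * c + real n / (2 * (real n - 1)) * x - (real n - 2) / (2 * (real n - 1)) * (x * ?s)) - x * (real n / (2 * (real n - 1)) - (real n - 2) / (2 * (real n - 1)) * ((2 * x + 4 * (real n - 1) * c) / (2 * (x * ?s)))) - 3 * real n * c"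
      using Id_i[OF mf(1) cpos sp(1)[OF xp] sp(2)[OF xp]] unfolding mf(3,4) .
    show ?thesis unfolding g gd w W1[OF x] using Id .
  qed
  have P2: "2 * x0 * \<omega>'' x0 + \<omega>' x0 > 0"
    unfolding EE[OF order_refl] using Er_pos[OF sp(1)[OF x0p] mf(2)] .
  have S: "((\<lambda>x. sf n c x) \<longlongrightarrow> 1) at_top"
  proof -
    have "((\<lambda>x. 4 * (real n - 1) * c / x) \<longlongrightarrow> 0) at_top"
      by (rule tendsto_divide_0[OF tendsto_const filterlim_at_top_imp_at_infinity[OF filterlim_ident]])
    then have "((\<lambda>x. 1 + 4 * (real n - 1) * c / x) \<longlongrightarrow> 1 + 0) at_top"
      by (intro tendsto_add tendsto_const)
    then have "((\<lambda>x. sqrt (1 + 4 * (real n - 1) * c / x)) \<longlongrightarrow> sqrt (1 + 0)) at_top"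
      by (rule tendsto_real_sqrt)
    then show ?thesis unfolding sf_def by simp
  qed
  have lim0: "((\<lambda>x. Pp ?M (sf n c x) / (32 * (?M + 1)^2 * (sf n c x)^5)) \<longlongrightarrow> Pp ?M 1 / (32 * (?M + 1)^2 * 1^5)) at_top"
    using mf by (intro tendsto_divide isCont_tendsto_compose[OF Pp_cont S] tendsto_mult tendsto_const tendsto_power S) auto
  have Lv: "Pp ?M 1 / (32 * (?M + 1)^2 * 1^5) = 1 / (?M + 1)^2"
    using Er_eq[of 1 ?M] Er_1[of ?M] mf by simp
  have ev: "eventually (\<lambda>x. Pp ?M (sf n c x) / (32 * (?M + 1)^2 * (sf n c x)^5) = 2 * x * \<omega>'' x + \<omega>' x) at_top"
    using eventually_ge_at_top[of x0]
  proof eventually_elim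
    case (elim x)
    have "sf n c x > 0" using sp(1)[OF xpos[OF elim]] by simp
    then show ?case unfolding EE[OF elim] using Er_eq[of "sf n c x" ?M] mf by simp
  qed
  have P3: "\<exists>L > 0. ((\<lambda>x. 2 * x * \<omega>'' x + \<omega>' x) \<longlongrightarrow> L) at_top"
  proof (intro exI conjI)
    show "1 / (?M + 1)^2 > 0" using mf by simp
    show "((\<lambda>x. 2 * x * \<omega>'' x + \<omega>' x) \<longlongrightarrow> 1 / (?M + 1)^2) at_top"
      using tendsto_cong[OF ev] lim0 Lv by simp
  qed
  have c1: "continuous_on {0..} \<omega>"
    unfolding continuous_on_eq_continuous_within using DERIV_continuous[OF d1] by auto
  have c2: "continuous_on {0..} \<omega>'"
    unfolding continuous_on_eq_continuous_within using DERIV_continuous[OF d2] by auto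
  have "continuous_on {0..x0} (\<lambda>x. \<omega> x - x * \<omega>' x)"
    by (intro continuous_intros continuous_on_subset[OF c1] continuous_on_subset[OF c2]) auto
  then have B1: "bounded ((\<lambda>x. \<omega> x - x * \<omega>' x) ` {0..x0})"
    by (intro compact_imp_bounded compact_continuous_image) auto
  have sub: "(\<lambda>x. \<omega> x - x * \<omega>' x) ` {x0..} \<subseteq> Bd ?M c ` {1..sf n c x0}"
  proof
    fix y assume "y \<in> (\<lambda>x. \<omega> x - x * \<omega>' x) ` {x0..}"
    then obtain x where x: "x \<ge> x0" and y: "y = \<omega> x - x * \<omega>' x" by auto
    have xp: "x > 0" using xpos[OF x] .
    have "y = Bd ?M c (sf n c x)"
      unfolding y W1[OF x] formula[OF x[unfolded x0_def]] F_s[OF n3 cpos xp]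
      by (rule Id_B[OF mf(1) cpos sp(1)[OF xp] sp(2)[OF xp]])
    moreover have "sf n c x \<in> {1..sf n c x0}"
    proof -
      have "4 * (real n - 1) * c / x \<le> 4 * (real n - 1) * c / x0"
        using x x0p mf cpos by (intro divide_left_mono) auto
      then have "sf n c x \<le> sf n c x0" unfolding sf_def by simp
      then show ?thesis using sp(1)[OF xp] by simp
    qed
    ultimately show "y \<in> Bd ?M c ` {1..sf n c x0}" by blast
  qed
  have "continuous_on {1..sf n c x0} (Bd ?M c)"
    unfolding Bd_def[abs_def] Ap_def by (intro continuous_intros) (use mf in auto)
  then have "bounded (Bd ?M c ` {1..sf n c x0})"
    by (intro compact_imp_bounded compact_continuous_image) auto
  then have B2: "bounded ((\<lambda>x. \<omega> x - x * \<omega>' x) ` {x0..})" using sub bounded_subset by blast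
  have U: "{0..} = {0..x0} \<union> {x0..}" using x0p by auto
  have P4: "bounded ((\<lambda>x. \<omega> x - x * \<omega>' x) ` {0..})"
    unfolding U image_Un using B1 B2 by simp
  show ?thesis using P1 P2 P3 P4 unfolding x0_def by blast
qed


end
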